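(* Let $g_n$ denote the parity of the number of digits equal to $1$ in the negabinary representation of $n$. Then for every integer $m\ge0$: $g_{2^m-1}=0$ if $m=0$; $g_{2^m-1}=1$ if $m=1$; $g_{2^m-1}=1$ if $m\ge2$ is even; and $g_{2^m-1}=0$ if $m\ge3$ is odd.
   Context: Every nonnegative integer $n$ has a unique representation $n=\sum_{i\ge0} d_i(-2)^i$ with digits $d_i\in\{0,1\}$, only finitely many nonzero; this is the negabinary representation. Parity means the number modulo $2$. *)

theory Defs
  imports Main
begin

definition is_negabinary :: "nat \<Rightarrow> (nat \<Rightarrow> nat) \<Rightarrow> bool" where
  "is_negabinary n d \<longleftrightarrow> (\<forall>i. d i \<in> {0, 1}) \<and> finite {i. d i \<noteq> 0} \<and>
     int n = (\<Sum>i\<in>{i. d i \<noteq> 0}. int (d i) * (-2) ^ i)"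

definition negabinary_digits :: "nat \<Rightarrow> nat \<Rightarrow> nat" where
  "negabinary_digits n = (THE d. is_negabinary n d)"

definition g :: "nat \<Rightarrow> nat" where
  "g n = card {i. negabinary_digits n i = 1} mod 2"

end

theory Submission
  imports Defs
begin

lemma digits_unique_aux:
  fixes d e :: "nat \<Rightarrow> nat"
  assumes "\<forall>i. d i \<in> {0,1}" "\<forall>i. e i \<in> {0,1}"
    and "(\<Sum>i<N. int (d i) * (-2)^i) = (\<Sum>i<N. int (e i) * (-2)^i)"
  shows "\<forall>i<N. d i = e i"
  using assms
proof (induction N arbitrary: d e)
  case 0
  then show ?case by simp
next
  case (Suc N)
  have sd: "(\<Sum>i<Suc N. int (d i) * (-2)^i) = int (d 0) + (-2) * (\<Sum>i<N. int (d (Suc i)) * (-2)^i)"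
    unfolding sum.lessThan_Suc_shift by (simp add: sum_distrib_left mult_ac del: sum.lessThan_Suc)
  have se: "(\<Sum>i<Suc N. int (e i) * (-2)^i) = int (e 0) + (-2) * (\<Sum>i<N. int (e (Suc i)) * (-2)^i)"
    unfolding sum.lessThan_Suc_shift by (simp add: sum_distrib_left mult_ac del: sum.lessThan_Suc)
  define A where "A = (\<Sum>i<N. int (d (Suc i)) * (-2)^i)"
  define B where "B = (\<Sum>i<N. int (e (Suc i)) * (-2)^i)"
  have eq: "int (d 0) + (-2) * A = int (e 0) + (-2) * B"
    using Suc.prems(3) sd se A_def B_def by simp
  have d0: "d 0 \<in> {0,1}" "e 0 \<in> {0,1}" using Suc.prems by auto
  have "d 0 = e 0"
  proof (rule ccontr)
    assume "d 0 \<noteq> e 0"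
    with d0 have "int (d 0) - int (e 0) = 1 \<or> int (d 0) - int (e 0) = -1" by auto
    moreover have "int (d 0) - int (e 0) = 2 * (A - B)" using eq by (simp add: algebra_simps)
    ultimately show False by presburger
  qed
  with eq have "A = B" by simp
  then have "\<forall>i<N. d (Suc i) = e (Suc i)"
  proof -
    have h1: "\<forall>i. d (Suc i) \<in> {0,1}" "\<forall>i. e (Suc i) \<in> {0,1}" using Suc.prems(1,2) by blast+
    show ?thesis using Suc.IH[OF h1] \<open>A = B\<close> unfolding A_def B_def by blast
  qed
  with \<open>d 0 = e 0\<close> show ?case by (auto simp: less_Suc_eq_0_disj)
qed

lemma sum_support:
  assumes "finite {i. d i \<noteq> (0::nat)}" "{i. d i \<noteq> 0} \<subseteq> {..<N}"
  shows "(\<Sum>i\<in>{i. d i \<noteq> 0}. int (d i) * (-2::int) ^ i) = (\<Sum>i<N. int (d i) * (-2) ^ i)"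
  by (rule sum.mono_neutral_left) (use assms in auto)

lemma negabinary_unique:
  assumes "is_negabinary n d" "is_negabinary n e"
  shows "d = e"
proof -
  have fd: "finite {i. d i \<noteq> 0}" and fe: "finite {i. e i \<noteq> 0}"
    using assms unfolding is_negabinary_def by auto
  have "finite ({i. d i \<noteq> 0} \<union> {i. e i \<noteq> 0})" using fd fe by simp
  then obtain N where N0: "\<forall>n\<in>{i. d i \<noteq> 0} \<union> {i. e i \<noteq> 0}. n < N"
    unfolding finite_nat_set_iff_bounded by blast
  then have N: "{i. d i \<noteq> 0} \<union> {i. e i \<noteq> 0} \<subseteq> {..<N}" by blast
  have "(\<Sum>i<N. int (d i) * (-2)^i) = (\<Sum>i<N. int (e i) * (-2)^i)"
  proof -
    have a: "{i. d i \<noteq> 0} \<subseteq> {..<N}" "{i. e i \<noteq> 0} \<subseteq> {..<N}" using N by blast+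
    have "int n = (\<Sum>i\<in>{i. d i \<noteq> 0}. int (d i) * (-2) ^ i)"
         "int n = (\<Sum>i\<in>{i. e i \<noteq> 0}. int (e i) * (-2) ^ i)"
      using assms unfolding is_negabinary_def by blast+
    then show ?thesis using sum_support[OF fd a(1)] sum_support[OF fe a(2)] by simp
  qed
  then have lt: "\<forall>i<N. d i = e i"
  proof -
    have "\<forall>i. d i \<in> {0,1}" "\<forall>i. e i \<in> {0,1}" using assms unfolding is_negabinary_def by blast+
    then show ?thesis using digits_unique_aux \<open>(\<Sum>i<N. int (d i) * (-2)^i) = _\<close> by blast
  qed
  show ?thesis
  proof
    fix i show "d i = e i"
    proof (cases "i < N")
      case True then show ?thesis using lt by auto
    next
      case False then have "d i = 0" "e i = 0" using N by (blast dest: subsetD)+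
      then show ?thesis by simp
    qed
  qed
qed

lemma digits_eq:
  assumes "is_negabinary n d"
  shows "negabinary_digits n = d"
  unfolding negabinary_digits_def
  by (rule the_equality) (use assms negabinary_unique in auto)

lemma set_rep:
  assumes "finite S" "int n = (\<Sum>i\<in>S. (-2)^i)"
  shows "g n = card S mod 2"
proof -
  define d where "d = (\<lambda>i. if i \<in> S then 1 else (0::nat))"
  have s: "{i. d i \<noteq> 0} = S" "{i. d i = 1} = S" by (auto simp: d_def)
  have "is_negabinary n d"
    unfolding is_negabinary_def s using assms by (auto simp: d_def)
  then show ?thesis unfolding g_def digits_eq[OF \<open>is_negabinary n d\<close>] s by simp
qed

theorem corollary1:
  fixes m :: nat
  shows "g (2 ^ m - 1) = (if m = 0 then 0 else if m = 1 then 1 else if even m then 1 else 0)"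
proof -
  have p: "int (2 ^ m - 1) = 2 ^ m - 1"
    by (simp add: of_nat_diff)
  consider "m = 0" | "m = 1" | "m \<ge> 2" "even m" | "m \<ge> 3" "odd m"
    by (metis One_nat_def Suc_leI dvd_refl even_Suc le_neq_implies_less less_Suc_eq_0_disj numeral_2_eq_2 numeral_3_eq_3 not_less odd_one)
  then show ?thesis
  proof cases
    case 1
    then show ?thesis using set_rep[of "{}" 0] by simp
  next
    case 2
    then show ?thesis using set_rep[of "{0}" 1] by simp
  next
    case 3
    have "(\<Sum>i\<in>{0,1,m}. (-2::int)^i) = 2^m - 1"
      using 3 by (simp add: power_minus_even)
    then have "g (2^m-1) = card {0,1,m} mod 2" using set_rep[of "{0,1,m}"] p by simp
    then show ?thesis using 3 by simp
  next
    case 4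
    have "(\<Sum>i\<in>{0,1,m,m+1}. (-2::int)^i) = 2^m - 1"
      using 4 by (simp add: power_minus_odd)
    then have "g (2^m-1) = card {0,1,m,m+1} mod 2" using set_rep[of "{0,1,m,m+1}"] p by simp
    then show ?thesis using 4 by simp
  qed
qed

end
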